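(* Let $G$ be a strongly regular graph with complement $\overline{G}$. Then $G$ is $2$-e.c. if and only if both $G$ and $\overline{G}$ are connected and both $G$ and $\overline{G}$ contain a triangle.
   Context: A graph $G$ with vertex set $V$ is $n$-e.c. if for every pair of disjoint subsets $A,B\subseteq V$ with $|A\cup B|=n$ (either may be empty) there is a vertex $z\notin A\cup B$ adjacent to every vertex of $A$ and to no vertex of $B$. A strongly regular graph with parameters $(v,k,\lambda,\mu)$ is a $k$-regular graph on $v$ vertices in which every pair of adjacent vertices has exactly $\lambda$ common neighbours and every pair of distinct nonadjacent vertices has exactly $\mu$ common neighbours; it is required to have at least one edge and at least one pair of distinct nonadjacent vertices. *)

theory Defs
  imports Main
begin

definition simple_graph :: "'a set \<Rightarrow> ('a \<Rightarrow> 'a \<Rightarrow> bool) \<Rightarrow> bool" where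
  "simple_graph V E \<longleftrightarrow> finite V \<and> (\<forall>x y. E x y \<longrightarrow> x \<in> V \<and> y \<in> V)
     \<and> (\<forall>x y. E x y \<longrightarrow> E y x) \<and> (\<forall>x. \<not> E x x)"

definition compl_graph :: "'a set \<Rightarrow> ('a \<Rightarrow> 'a \<Rightarrow> bool) \<Rightarrow> ('a \<Rightarrow> 'a \<Rightarrow> bool)" where
  "compl_graph V E = (\<lambda>x y. x \<in> V \<and> y \<in> V \<and> x \<noteq> y \<and> \<not> E x y)"

definition n_ec :: "nat \<Rightarrow> 'a set \<Rightarrow> ('a \<Rightarrow> 'a \<Rightarrow> bool) \<Rightarrow> bool" where
  "n_ec n V E \<longleftrightarrow> (\<forall>A B. A \<subseteq> V \<and> B \<subseteq> V \<and> A \<inter> B = {} \<and> card (A \<union> B) = n \<longrightarrow>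
     (\<exists>z \<in> V - (A \<union> B). (\<forall>a\<in>A. E z a) \<and> (\<forall>b\<in>B. \<not> E z b)))"

definition strongly_regular_params ::
  "'a set \<Rightarrow> ('a \<Rightarrow> 'a \<Rightarrow> bool) \<Rightarrow> nat \<Rightarrow> nat \<Rightarrow> nat \<Rightarrow> nat \<Rightarrow> bool" where
  "strongly_regular_params V E v k l m \<longleftrightarrow> simple_graph V E \<and> card V = v
     \<and> (\<forall>x\<in>V. card {y\<in>V. E x y} = k)
     \<and> (\<forall>x y. E x y \<longrightarrow> card {w\<in>V. E x w \<and> E y w} = l)
     \<and> (\<forall>x\<in>V. \<forall>y\<in>V. x \<noteq> y \<and> \<not> E x y \<longrightarrow> card {w\<in>V. E x w \<and> E y w} = m)
     \<and> (\<exists>x y. E x y)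
     \<and> (\<exists>x\<in>V. \<exists>y\<in>V. x \<noteq> y \<and> \<not> E x y)"

definition strongly_regular :: "'a set \<Rightarrow> ('a \<Rightarrow> 'a \<Rightarrow> bool) \<Rightarrow> bool" where
  "strongly_regular V E \<longleftrightarrow> (\<exists>v k l m. strongly_regular_params V E v k l m)"

definition graph_connected :: "'a set \<Rightarrow> ('a \<Rightarrow> 'a \<Rightarrow> bool) \<Rightarrow> bool" where
  "graph_connected V E \<longleftrightarrow> (\<forall>x\<in>V. \<forall>y\<in>V. E\<^sup>*\<^sup>* x y)"

definition has_triangle :: "('a \<Rightarrow> 'a \<Rightarrow> bool) \<Rightarrow> bool" where
  "has_triangle E \<longleftrightarrow> (\<exists>x y z. x \<noteq> y \<and> y \<noteq> z \<and> x \<noteq> z \<and> E x y \<and> E y z \<and> E x z)"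

end

theory Submission
  imports Defs
begin

lemma rt_clique:
  assumes "F\<^sup>*\<^sup>* a b" and "\<And>x y z. F x y \<Longrightarrow> F y z \<Longrightarrow> x \<noteq> z \<Longrightarrow> F x z"
  shows "a = b \<or> F a b"
  using assms(1)
proof induction
  case base then show ?case by simp
next
  case (step y z) then show ?case using assms(2) by blast
qed

lemma ec2_intro:
  assumes sg: "simple_graph V E"
  and P1: "\<And>x y. x \<in> V \<Longrightarrow> y \<in> V \<Longrightarrow> x \<noteq> y \<Longrightarrow> \<exists>z\<in>V. z \<noteq> x \<and> z \<noteq> y \<and> E z x \<and> E z y"
  and P2: "\<And>x y. x \<in> V \<Longrightarrow> y \<in> V \<Longrightarrow> x \<noteq> y \<Longrightarrow> \<exists>z\<in>V. z \<noteq> x \<and> z \<noteq> y \<and> \<not> E z x \<and> \<not> E z y"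
  and P3: "\<And>x y. x \<in> V \<Longrightarrow> y \<in> V \<Longrightarrow> x \<noteq> y \<Longrightarrow> \<exists>z\<in>V. z \<noteq> x \<and> z \<noteq> y \<and> E z x \<and> \<not> E z y"
  shows "n_ec 2 V E"
  unfolding n_ec_def
proof (intro allI impI)
  fix A B assume h: "A \<subseteq> V \<and> B \<subseteq> V \<and> A \<inter> B = {} \<and> card (A \<union> B) = 2"
  then obtain x y where xy: "x \<noteq> y" "A \<union> B = {x, y}" by (meson card_2_iff)
  have xV: "x \<in> V" "y \<in> V" using h xy by auto
  have AB: "A \<subseteq> {x,y}" "B = {x,y} - A" using xy h by blast+
  have "(A = {x,y} \<and> B = {}) \<or> (A = {} \<and> B = {x,y}) \<or> (A = {x} \<and> B = {y}) \<or> (A = {y} \<and> B = {x})"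
  proof (cases "x \<in> A"; cases "y \<in> A")
  qed (use AB xy(1) in auto)
  then consider "A = {x,y}" "B = {}" | "A = {}" "B = {x,y}" | "A = {x}" "B = {y}" | "A = {y}" "B = {x}"
    by blast
  then show "\<exists>z\<in>V - (A \<union> B). (\<forall>a\<in>A. E z a) \<and> (\<forall>b\<in>B. \<not> E z b)"
  proof cases
    case 1 then show ?thesis using P1[OF xV xy(1)] by auto
  next
    case 2 then show ?thesis using P2[OF xV xy(1)] by auto
  next
    case 3 then show ?thesis using P3[OF xV xy(1)] by auto
  next
    case 4 then show ?thesis using P3[OF xV(2) xV(1)] xy(1) by auto
  qed
qed

theorem mainTheorem2:
  fixes V :: "'a set" and E :: "'a \<Rightarrow> 'a \<Rightarrow> bool"
  assumes "strongly_regular V E"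
  shows "n_ec 2 V E \<longleftrightarrow>
           (graph_connected V E \<and> graph_connected V (compl_graph V E)
            \<and> has_triangle E \<and> has_triangle (compl_graph V E))"
proof -
  obtain v k l m where sr: "strongly_regular_params V E v k l m"
    using assms unfolding strongly_regular_def by blast
  have sg: "simple_graph V E" using sr unfolding strongly_regular_params_def by blast
  have fin: "finite V" and inV: "\<And>x y. E x y \<Longrightarrow> x \<in> V \<and> y \<in> V"
    and sym: "\<And>x y. E x y \<Longrightarrow> E y x" and irr: "\<And>x. \<not> E x x"
    using sg unfolding simple_graph_def by blast+
  have cV: "card V = v" and deg: "\<And>x. x \<in> V \<Longrightarrow> card {y\<in>V. E x y} = k"
    and lam: "\<And>x y. E x y \<Longrightarrow> card {w\<in>V. E x w \<and> E y w} = l"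
    and mu: "\<And>x y. x \<in> V \<Longrightarrow> y \<in> V \<Longrightarrow> x \<noteq> y \<Longrightarrow> \<not> E x y \<Longrightarrow> card {w\<in>V. E x w \<and> E y w} = m"
    and ex_e: "\<exists>x y. E x y" and ex_n: "\<exists>x\<in>V. \<exists>y\<in>V. x \<noteq> y \<and> \<not> E x y"
    using sr unfolding strongly_regular_params_def by blast+
  let ?F = "compl_graph V E"
  show ?thesis
  proof
    assume ec: "n_ec 2 V E"
    have Q1: "\<exists>z\<in>V. z \<noteq> x \<and> z \<noteq> y \<and> E z x \<and> E z y" if "x \<in> V" "y \<in> V" "x \<noteq> y" for x y
    proof -
      have "card ({x,y} \<union> {}) = 2" using that by simp
      then have "\<exists>z\<in>V - ({x,y} \<union> {}). (\<forall>a\<in>{x,y}. E z a) \<and> (\<forall>b\<in>{}. \<not> E z b)"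
        using ec[unfolded n_ec_def, rule_format, of "{x,y}" "{}"] that by auto
      then show ?thesis by auto
    qed
    have Q2: "\<exists>z\<in>V. z \<noteq> x \<and> z \<noteq> y \<and> \<not> E z x \<and> \<not> E z y" if "x \<in> V" "y \<in> V" "x \<noteq> y" for x y
    proof -
      have "card ({} \<union> {x,y}) = 2" using that by simp
      then have "\<exists>z\<in>V - ({} \<union> {x,y}). (\<forall>a\<in>{}. E z a) \<and> (\<forall>b\<in>{x,y}. \<not> E z b)"
        using ec[unfolded n_ec_def, rule_format, of "{}" "{x,y}"] that by auto
      then show ?thesis by auto
    qed
    have c1: "graph_connected V E"
      unfolding graph_connected_def
    proof (intro ballI)
      fix x y assume "x \<in> V" "y \<in> V"
      show "E\<^sup>*\<^sup>* x y"
      proof (cases "x = y")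
        case False
        then obtain z where "E z x" "E z y" using Q1 \<open>x \<in> V\<close> \<open>y \<in> V\<close> by blast
        then have "E x z" using sym by blast
        then show ?thesis using \<open>E z y\<close> by (meson converse_rtranclp_into_rtranclp r_into_rtranclp)
      qed simp
    qed
    have c2: "graph_connected V ?F"
      unfolding graph_connected_def
    proof (intro ballI)
      fix x y assume "x \<in> V" "y \<in> V"
      show "?F\<^sup>*\<^sup>* x y"
      proof (cases "x = y")
        case False
        then obtain z where z: "z \<in> V" "z \<noteq> x" "z \<noteq> y" "\<not> E z x" "\<not> E z y"
          using Q2 \<open>x \<in> V\<close> \<open>y \<in> V\<close> by blast
        then have "?F x z" "?F z y" using sym \<open>x \<in> V\<close> \<open>y \<in> V\<close> unfolding compl_graph_def by blast+
        then show ?thesis by (meson converse_rtranclp_into_rtranclp r_into_rtranclp)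
      qed simp
    qed
    have t1: "has_triangle E"
    proof -
      obtain x y where e: "E x y" using ex_e by blast
      then have "x \<noteq> y" using irr by blast
      then obtain z where "z \<noteq> x" "z \<noteq> y" "E z x" "E z y" using Q1 inV e by blast
      then show ?thesis unfolding has_triangle_def using e sym \<open>x \<noteq> y\<close> by blast
    qed
    have t2: "has_triangle ?F"
    proof -
      obtain x y where e: "x \<in> V" "y \<in> V" "x \<noteq> y" "\<not> E x y" using ex_n by blast
      then obtain z where "z \<in> V" "z \<noteq> x" "z \<noteq> y" "\<not> E z x" "\<not> E z y" using Q2 by blast
      then show ?thesis unfolding has_triangle_def compl_graph_def using e sym by blast
    qed
    show "graph_connected V E \<and> graph_connected V ?F \<and> has_triangle E \<and> has_triangle ?F"
      using c1 c2 t1 t2 by blast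
  next
    assume H: "graph_connected V E \<and> graph_connected V ?F \<and> has_triangle E \<and> has_triangle ?F"
    define N where "N x = {y\<in>V. E x y}" for x
    have finN: "finite (N x)" for x using fin unfolding N_def by simp
    have NV: "N x \<subseteq> V" for x unfolding N_def by blast
    have NI: "{w\<in>V. E x w \<and> E y w} = N x \<inter> N y" for x y unfolding N_def by blast
    have lpos: "l > 0"
    proof -
      obtain a b c where t: "a \<noteq> b" "E a b" "E b c" "E a c" using H unfolding has_triangle_def by blast
      have "c \<in> {w\<in>V. E a w \<and> E b w}" using t inV by blast
      then have "card {w\<in>V. E a w \<and> E b w} > 0" using fin by (auto simp: card_gt_0_iff)
      then show ?thesis using lam t by simp
    qed
    have mpos: "m > 0"
    proof (rule ccontr)
      assume "\<not> m > 0"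
      then have m0: "m = 0" by simp
      have tr: "E x z" if "E x y" "E y z" "x \<noteq> z" for x y z
      proof (rule ccontr)
        assume "\<not> E x z"
        then have "card {w\<in>V. E x w \<and> E z w} = 0" using mu inV that m0 by blast
        moreover have "y \<in> {w\<in>V. E x w \<and> E z w}" using that inV sym by blast
        ultimately show False using fin by (simp add: card_eq_0_iff) blast
      qed
      obtain a b where "a \<in> V" "b \<in> V" "a \<noteq> b" "\<not> E a b" using ex_n by blast
      moreover have "E\<^sup>*\<^sup>* a b" using H \<open>a \<in> V\<close> \<open>b \<in> V\<close> unfolding graph_connected_def by blast
      ultimately show False using rt_clique[of E a b] tr by blast
    qed
    have P1: "\<exists>z\<in>V. z \<noteq> x \<and> z \<noteq> y \<and> E z x \<and> E z y" if "x \<in> V" "y \<in> V" "x \<noteq> y" for x y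
    proof -
      have "card {w\<in>V. E x w \<and> E y w} > 0"
      proof (cases "E x y")
        case True then show ?thesis using lam[OF True] lpos by simp
      next
        case False then show ?thesis using mu[OF that False] mpos by simp
      qed
      then obtain w where "w \<in> {w\<in>V. E x w \<and> E y w}" by (auto simp: card_gt_0_iff)
      then have w: "w \<in> V" "E x w" "E y w" by auto
      then have "E w x" "E w y" "w \<noteq> x" "w \<noteq> y" using irr sym[OF w(2)] sym[OF w(3)] by auto
      then show ?thesis using w(1) by blast
    qed
    define C where "C x y = {w\<in>V. w \<noteq> x \<and> w \<noteq> y \<and> \<not> E x w \<and> \<not> E y w}" for x y
    have Cdiff: "C x y = V - (N x \<union> N y \<union> {x,y})" for x y unfolding C_def N_def by blast
    have cardC: "card (C x y) + card (N x \<union> N y \<union> {x,y}) = v" if "x \<in> V" "y \<in> V" for x y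
    proof -
      have "N x \<union> N y \<union> {x,y} \<subseteq> V" using NV that by blast
      then show ?thesis unfolding Cdiff cV[symmetric]
        using card_Diff_subset[OF finite_subset[OF _ fin]] card_mono[OF fin] by (metis le_add_diff_inverse2)
    qed
    have cUI: "card (N x \<union> N y) + card (N x \<inter> N y) = 2*k" if "x \<in> V" "y \<in> V" for x y
      using card_Un_Int[OF finN finN, of x y] deg that unfolding N_def by simp
    have ce: "card (C x y) + 2*k = v + l" if "E x y" for x y
    proof -
      have xy: "x \<in> V" "y \<in> V" using inV that by auto
      have "N x \<union> N y \<union> {x,y} = N x \<union> N y" using that sym xy unfolding N_def by blast
      then show ?thesis using cardC[OF xy] cUI[OF xy] lam[OF that] NI[of x y] by simp
    qed
    have cn: "card (C x y) + 2*k + 2 = v + m" if "x \<in> V" "y \<in> V" "x \<noteq> y" "\<not> E x y" for x y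
    proof -
      have "x \<notin> N x \<union> N y" "y \<notin> N x \<union> N y" using that irr sym unfolding N_def by blast+
      then have "card (N x \<union> N y \<union> {x,y}) = card (N x \<union> N y) + 2"
        using that finN by (simp add: card_insert_if finN insert_commute)
      then show ?thesis using cardC[OF that(1,2)] cUI[OF that(1,2)] mu[OF that] NI[of x y] by simp
    qed
    have cnpos: "card (C x y) > 0" if "x \<in> V" "y \<in> V" "x \<noteq> y" "\<not> E x y" for x y
    proof -
      obtain a b c where t: "a \<noteq> b" "b \<noteq> c" "a \<noteq> c" "?F a b" "?F b c" "?F a c"
        using H unfolding has_triangle_def by blast
      have ab: "a \<in> V" "b \<in> V" "\<not> E a b" using t unfolding compl_graph_def by auto
      have "c \<in> C a b" using t sym unfolding C_def compl_graph_def by blast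
      then have "card (C a b) > 0" using fin unfolding C_def by (auto simp: card_gt_0_iff)
      then show ?thesis using cn[OF ab(1,2) t(1) ab(3)] cn[OF that] by simp
    qed
    have cepos: "card (C x y) > 0" if "E x y" for x y
    proof (rule ccontr)
      assume "\<not> card (C x y) > 0"
      then have z: "card (C p q) = 0" if "E p q" for p q using ce[OF that] ce[OF \<open>E x y\<close>] \<open>\<not> card (C x y) > 0\<close> by simp
      have tr: "?F a c" if "?F a b" "?F b c" "a \<noteq> c" for a b c
      proof (rule ccontr)
        assume "\<not> ?F a c"
        then have "E a c" using that unfolding compl_graph_def by blast
        then have "C a c = {}" using z fin unfolding C_def by auto
        moreover have "b \<in> C a c" using that sym unfolding C_def compl_graph_def by blast
        ultimately show False by blast
      qed
      have "?F\<^sup>*\<^sup>* x y" using H inV[OF that] unfolding graph_connected_def by blast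
      then have "x = y \<or> ?F x y" using rt_clique[of ?F x y] tr by blast
      then show False using that irr unfolding compl_graph_def by blast
    qed
    have P2: "\<exists>z\<in>V. z \<noteq> x \<and> z \<noteq> y \<and> \<not> E z x \<and> \<not> E z y" if "x \<in> V" "y \<in> V" "x \<noteq> y" for x y
    proof -
      have "card (C x y) > 0" using cepos cnpos that by (cases "E x y") auto
      then obtain w where "w \<in> C x y" by (auto simp: card_gt_0_iff)
      then show ?thesis unfolding C_def using sym by blast
    qed
    obtain a0 b0 where ab0: "a0 \<in> V" "b0 \<in> V" "a0 \<noteq> b0" "\<not> E a0 b0" using ex_n by blast
    obtain p0 q0 where pq0: "E p0 q0" using ex_e by blast
    have P3: "\<exists>z\<in>V. z \<noteq> x \<and> z \<noteq> y \<and> E z x \<and> \<not> E z y" if "x \<in> V" "y \<in> V" "x \<noteq> y" for x y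
    proof (rule ccontr)
      assume nz: "\<not> ?thesis"
      show False
      proof (cases "E x y")
        case True
        have cd: "card (N u - {w}) = k - 1" if "E u w" for u w
        proof -
          have "w \<in> N u" "u \<in> V" using that inV unfolding N_def by auto
          moreover have "card (N u) = k" using deg[OF \<open>u \<in> V\<close>] unfolding N_def by simp
          ultimately show ?thesis using card_Diff_singleton[OF \<open>w \<in> N u\<close>] by simp
        qed
        have "N x - {y} \<subseteq> N x \<inter> N y"
        proof
          fix w assume w: "w \<in> N x - {y}"
          then have w2: "w \<in> V" "E x w" "w \<noteq> y" unfolding N_def by auto
          then have "E w x" "w \<noteq> x" using sym[OF w2(2)] irr by auto
          then have "E w y" using nz w2 by blast
          then show "w \<in> N x \<inter> N y" using w sym[OF \<open>E w y\<close>] unfolding N_def by auto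
        qed
        then have "card (N x - {y}) \<le> card (N x \<inter> N y)" using finN by (intro card_mono) auto
        then have "k - 1 \<le> l" using cd[OF True] lam[OF True] NI by simp
        have eq: "N u \<inter> N w = N u - {w}" if "E u w" for u w
        proof -
          have s: "N u \<inter> N w \<subseteq> N u - {w}" using irr unfolding N_def by blast
          have "card (N u \<inter> N w) = l" using lam[OF that] NI by simp
          moreover have "l \<le> k - 1" using card_mono[OF _ s] finN cd[OF that] lam[OF that] NI by simp
          ultimately have "card (N u \<inter> N w) = card (N u - {w})" using cd[OF that] \<open>k - 1 \<le> l\<close> by simp
          then show ?thesis using card_subset_eq[OF _ s] finN by simp
        qed
        obtain c where c: "c \<in> V" "E c a0" "E c b0" using P1[OF ab0(1-3)] by blast
        have "b0 \<in> N c - {a0}" using c ab0 unfolding N_def by blast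
        then have "b0 \<in> N a0" using eq[OF c(2)] by blast
        then show False using ab0 unfolding N_def by blast
      next
        case False
        have s0: "N x \<subseteq> N x \<inter> N y"
        proof
          fix w assume w: "w \<in> N x"
          then have w2: "w \<in> V" "E x w" unfolding N_def by auto
          then have "E w x" "w \<noteq> x" "w \<noteq> y" using sym[OF w2(2)] irr False by auto
          then have "E w y" using nz w2 by blast
          then show "w \<in> N x \<inter> N y" using w sym[OF \<open>E w y\<close>] unfolding N_def by auto
        qed
        have "card (N x) \<le> card (N x \<inter> N y)" using card_mono[OF _ s0] finN by simp
        moreover have "card (N x \<inter> N y) \<le> card (N x)" using card_mono finN by (metis Int_lower1)
        ultimately have "m = k" using mu[OF that False] NI deg[OF that(1)] unfolding N_def by simp
        have sub: "N u \<subseteq> N w" if "u \<in> V" "w \<in> V" "u \<noteq> w" "\<not> E u w" for u w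
        proof -
          have s: "N u \<inter> N w \<subseteq> N u" by blast
          have "card (N u \<inter> N w) = card (N u)" using mu[OF that] NI deg[OF that(1)] \<open>m = k\<close> unfolding N_def by simp
          then show ?thesis using card_subset_eq[OF finN s] by blast
        qed
        have pqV: "p0 \<in> V" "q0 \<in> V" "p0 \<noteq> q0" using inV pq0 irr by auto
        obtain w where w: "w \<in> V" "w \<noteq> p0" "w \<noteq> q0" "\<not> E w p0" "\<not> E w q0" using P2[OF pqV] by blast
        have "\<not> E p0 w" using w(4) sym by blast
        then have "N p0 \<subseteq> N w" using sub[OF pqV(1) w(1)] w(2) by blast
        then show False using pq0 w pqV unfolding N_def by blast
      qed
    qed
    show "n_ec 2 V E" using ec2_intro[OF sg P1 P2 P3] by blast
  qed
qed

end
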